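(* Let $\gamma$ be a hyperbolic element of $PSL(2,\mathbb{R})$. Then the set of periodic points of the map $\varphi\mapsto\varphi\circ\gamma^{-1}$ on $\mathrm{Har}(\mathbb{D})$, i.e. of $\varphi$ with $\varphi\circ\gamma^{k}=\varphi$ for some integer $k\ge1$, is dense in $\mathrm{Har}(\mathbb{D})$.
   Context: $\mathrm{Har}(\mathbb{D})$ is the set of complex-valued harmonic functions $\varphi$ on the open unit disc $\mathbb{D}$ with $\varphi(\mathbb{D})\subset\overline{\mathbb{D}}$, with the topology of uniform convergence on compact subsets. $PSL(2,\mathbb{R})\cong PSU(1,1)$ acts on $\mathbb{D}$ by $z\mapsto(\alpha z+\beta)/(\bar\beta z+\bar\alpha)$, $|\alpha|^2-|\beta|^2=1$. Hyperbolic means $|\mathrm{tr}|>2$. *)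

theory Defs
  imports "HOL-Analysis.Analysis"
begin

definition dx :: "(complex \<Rightarrow> complex) \<Rightarrow> complex \<Rightarrow> complex \<Rightarrow> bool" where
  "dx f z v \<longleftrightarrow> ((\<lambda>t::real. f (z + complex_of_real t)) has_vector_derivative v) (at 0)"

definition dy :: "(complex \<Rightarrow> complex) \<Rightarrow> complex \<Rightarrow> complex \<Rightarrow> bool" where
  "dy f z v \<longleftrightarrow> ((\<lambda>t::real. f (z + \<i> * complex_of_real t)) has_vector_derivative v) (at 0)"

definition harmonic_on :: "(complex \<Rightarrow> complex) \<Rightarrow> complex set \<Rightarrow> bool" where
  "harmonic_on f S \<longleftrightarrow> open S \<and>
     (\<exists>fx fy fxx fxy fyx fyy.
        (\<forall>z\<in>S. dx f z (fx z) \<and> dy f z (fy z) \<and>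
                dx fx z (fxx z) \<and> dy fx z (fxy z) \<and>
                dx fy z (fyx z) \<and> dy fy z (fyy z) \<and>
                fxx z + fyy z = 0) \<and>
        continuous_on S f \<and> continuous_on S fx \<and> continuous_on S fy \<and>
        continuous_on S fxx \<and> continuous_on S fxy \<and>
        continuous_on S fyx \<and> continuous_on S fyy)"

definition Har :: "(complex \<Rightarrow> complex) set" where
  "Har = {\<phi>. harmonic_on \<phi> (ball 0 1) \<and> \<phi> ` ball 0 1 \<subseteq> cball 0 1}"

text \<open>The element of PSU(1,1) given by (alpha, beta) with |alpha|^2 - |beta|^2 = 1.\<close>
definition moeb :: "complex \<Rightarrow> complex \<Rightarrow> complex \<Rightarrow> complex" where
  "moeb \<alpha> \<beta> z = (\<alpha> * z + \<beta>) / (cnj \<beta> * z + cnj \<alpha>)"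

text \<open>Hyperbolic: |trace| > 2, where the matrix is [[alpha, beta],[cnj beta, cnj alpha]].\<close>
definition hyperbolic :: "complex \<Rightarrow> complex \<Rightarrow> bool" where
  "hyperbolic \<alpha> \<beta> \<longleftrightarrow> cmod \<alpha> ^ 2 - cmod \<beta> ^ 2 = 1 \<and> \<bar>Re (\<alpha> + cnj \<alpha>)\<bar> > 2"

end

theory Submission
  imports Defs "HOL-Complex_Analysis.Complex_Analysis" "HOL-Real_Asymp.Real_Asymp"
begin


lemma partials_has_derivative:
  fixes f fx fy :: "complex \<Rightarrow> complex"
  assumes S: "open S" "z \<in> S"
    and d: "\<And>w. w \<in> S \<Longrightarrow> dy f w (fy w)" and dxz: "dx f z (fx z)"
    and cy: "continuous_on S fy"
  shows "(f has_derivative (\<lambda>h. Re h *\<^sub>R fx z + Im h *\<^sub>R fy z)) (at z)"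
  unfolding has_derivative_at_alt
proof (intro conjI allI impI)
  show "bounded_linear (\<lambda>h. Re h *\<^sub>R fx z + Im h *\<^sub>R fy z)"
    by (intro bounded_linear_add bounded_linear_compose[OF bounded_linear_scaleR_left bounded_linear_Re]
        bounded_linear_compose[OF bounded_linear_scaleR_left bounded_linear_Im])
  fix e :: real assume e: "e > 0"
  have "((\<lambda>t::real. f (z + complex_of_real t)) has_derivative (\<lambda>t. t *\<^sub>R fx z)) (at 0)"
    using dxz unfolding dx_def has_vector_derivative_def .
  then obtain d1 where d1: "d1 > 0" and
    d1b: "\<And>t::real. norm (t - 0) < d1 \<Longrightarrow> norm (f (z + complex_of_real t) - f (z + complex_of_real 0) - (t - 0) *\<^sub>R fx z) \<le> (e/4) * norm (t - 0)"
    unfolding has_derivative_at_alt using e by (metis divide_pos_pos zero_less_numeral)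
  have "continuous (at z) fy" using cy S by (simp add: continuous_on_eq_continuous_at)
  then obtain d2 where d2: "d2 > 0" "\<And>w. dist w z < d2 \<Longrightarrow> dist (fy w) (fy z) < e/8"
    unfolding continuous_at_eps_delta using e by (metis divide_pos_pos zero_less_numeral)
  obtain d3 where d3: "d3 > 0" "ball z d3 \<subseteq> S" using S open_contains_ball by blast
  define d where "d = min d1 (min d2 d3)"
  show "\<exists>d>0. \<forall>y. norm (y - z) < d \<longrightarrow> norm (f y - f z - (Re (y - z) *\<^sub>R fx z + Im (y - z) *\<^sub>R fy z)) \<le> e * norm (y - z)"
  proof (intro exI[of _ d] conjI allI impI)
    show "d > 0" using d1 d2 d3 by (simp add: d_def)
    fix y assume y: "norm (y - z) < d"
    define a where "a = Re (y - z)"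
    define b where "b = Im (y - z)"
    have ya: "y = z + of_real a + \<i> * of_real b" unfolding a_def b_def
      by (simp add: complex_eq_iff)
    have an: "\<bar>a\<bar> \<le> norm (y - z)" "\<bar>b\<bar> \<le> norm (y - z)" unfolding a_def b_def
      by (metis abs_Re_le_cmod, metis abs_Im_le_cmod)
    have T2: "norm (f (z + of_real a) - f z - a *\<^sub>R fx z) \<le> (e/4) * norm (y - z)"
    proof -
      have "norm (f (z + of_real a) - f z - a *\<^sub>R fx z) \<le> (e/4) * \<bar>a\<bar>"
        using d1b[of a] an y by (simp add: d_def)
      also have "\<dots> \<le> (e/4) * norm (y - z)" using an e by simp
      finally show ?thesis .
    qed
    define v where "v = (\<lambda>t::real. f (z + of_real a + \<i> * of_real t))"
    have pt: "z + of_real a + \<i> * of_real t \<in> ball z (min d2 d3)" if "t \<in> closed_segment 0 b" for t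
    proof -
      have "\<bar>t\<bar> \<le> \<bar>b\<bar>" using that by (auto simp: closed_segment_real_eq abs_mult mult_left_le)
      have "norm (of_real a + \<i> * of_real t) = norm (Complex a t)" by (simp add: Complex_eq)
      also have "\<dots> \<le> norm (Complex a b)" using \<open>\<bar>t\<bar> \<le> \<bar>b\<bar>\<close>
        by (simp add: cmod_def abs_le_square_iff)
      also have "\<dots> = norm (y - z)" unfolding a_def b_def by (metis complex_surj)
      finally have "norm (of_real a + \<i> * of_real t) < min d2 d3" using y by (simp add: d_def)
      moreover have "dist z (z + of_real a + \<i> * of_real t) = norm (of_real a + \<i> * of_real t)"
        by (metis add.assoc dist_add_cancel dist_0_norm dist_commute add.right_neutral)
      ultimately show ?thesis by simp
    qed
    have vd: "(v has_vector_derivative fy (z + of_real a + \<i> * of_real t)) (at t within closed_segment 0 b)"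
      if "t \<in> closed_segment 0 b" for t
    proof -
      let ?w = "z + of_real a + \<i> * of_real t"
      have "?w \<in> S" using pt[OF that] d3 by auto
      then have h2: "((\<lambda>s::real. f (?w + \<i> * of_real s)) has_vector_derivative fy ?w) (at ((\<lambda>u. u - t) t))"
        using d[of ?w] unfolding dy_def by simp
      have h1: "((\<lambda>u::real. u - t) has_vector_derivative 1) (at t)"
        using has_vector_derivative_diff[OF has_vector_derivative_id has_vector_derivative_const] by simp
      have "(((\<lambda>s::real. f (?w + \<i> * of_real s)) \<circ> (\<lambda>u. u - t)) has_vector_derivative (1::real) *\<^sub>R fy ?w) (at t)"
        by (rule vector_diff_chain_at[OF h1 h2])
      moreover have "((\<lambda>s::real. f (?w + \<i> * of_real s)) \<circ> (\<lambda>u. u - t)) = v"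
        by (rule ext) (simp add: v_def algebra_simps)
      ultimately show ?thesis by (simp add: has_vector_derivative_at_within)
    qed
    have "norm (v b - v 0 - (b - 0) *\<^sub>R fy (z + of_real a + \<i> * of_real 0)) \<le> norm (b - 0) * (e/4)"
    proof (rule vector_differentiable_bound_linearization[OF vd])
      show "closed_segment 0 b \<subseteq> closed_segment 0 b" by simp
      show "0 \<in> closed_segment 0 b" by simp
      fix x assume x: "x \<in> closed_segment 0 b"
      have "dist (z + of_real a + \<i> * of_real x) z < d2"
        using pt[OF x] by (simp add: dist_commute)
      then have "dist (fy (z + of_real a + \<i> * of_real x)) (fy z) < e/8"
        using d2(2) by blast
      moreover have "dist (z + of_real a + \<i> * of_real 0) z < d2"
        using pt[of 0] by (simp add: dist_commute)
      then have "dist (fy (z + of_real a + \<i> * of_real 0)) (fy z) < e/8"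
        using d2(2) by blast
      moreover have "dist (fy (z + of_real a + \<i> * of_real x)) (fy (z + of_real a + \<i> * of_real 0))
          \<le> dist (fy (z + of_real a + \<i> * of_real x)) (fy z) + dist (fy (z + of_real a + \<i> * of_real 0)) (fy z)"
        by (rule dist_triangle2)
      ultimately show "norm (fy (z + of_real a + \<i> * of_real x) - fy (z + of_real a + \<i> * of_real 0)) \<le> e/4"
        unfolding dist_norm by linarith
    qed
    then have T1a: "norm (f y - f (z + of_real a) - b *\<^sub>R fy (z + of_real a)) \<le> \<bar>b\<bar> * (e/4)"
      by (simp add: v_def ya)
    have "dist (z + of_real a + \<i> * of_real 0) z < d2"
      using pt[of 0] by (simp add: dist_commute)
    then have "dist (fy (z + of_real a)) (fy z) < e/8" using d2(2) by simp
    then have T1b: "norm (b *\<^sub>R fy (z + of_real a) - b *\<^sub>R fy z) \<le> \<bar>b\<bar> * (e/8)"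
      by (simp add: dist_norm flip: scaleR_diff_right)
         (metis abs_ge_zero less_imp_le mult.assoc mult_left_mono)
    have "norm (f y - f z - (Re (y - z) *\<^sub>R fx z + Im (y - z) *\<^sub>R fy z))
       = norm ((f y - f (z + of_real a) - b *\<^sub>R fy (z + of_real a)) + (b *\<^sub>R fy (z + of_real a) - b *\<^sub>R fy z)
           + (f (z + of_real a) - f z - a *\<^sub>R fx z))"
      by (simp add: a_def b_def algebra_simps)
    also have "\<dots> \<le> \<bar>b\<bar> * (e/4) + \<bar>b\<bar> * (e/8) + (e/4) * norm (y - z)"
      using T1a T1b T2 norm_triangle_le by (smt (verit) norm_triangle_ineq)
    also have "\<dots> \<le> e * norm (y - z)"
    proof -
      have "\<bar>b\<bar> * e \<le> norm (y - z) * e" using an e by (simp add: mult_right_mono)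
      moreover have "0 \<le> norm (y - z) * e" using e by simp
      ultimately show ?thesis by (simp add: algebra_simps)
    qed
    finally show "norm (f y - f z - (Re (y - z) *\<^sub>R fx z + Im (y - z) *\<^sub>R fy z)) \<le> e * norm (y - z)" .
  qed
qed

lemma has_derivative_dx_dy:
  assumes "(f has_derivative D) (at z)"
  shows "dx f z (D 1)" "dy f z (D \<i>)"
proof -
  have lin: "linear D" using assms has_derivative_linear by blast
  have "((f \<circ> (\<lambda>t::real. z + complex_of_real t)) has_derivative (D \<circ> (\<lambda>t. complex_of_real t))) (at 0)"
    by (rule diff_chain_at) (auto intro!: derivative_eq_intros assms)
  moreover have "(D \<circ> (\<lambda>t. complex_of_real t)) = (\<lambda>t. t *\<^sub>R D 1)"
  proof
    fix t :: real
    have "(D \<circ> (\<lambda>t. complex_of_real t)) t = D (t *\<^sub>R 1)" by (simp add: scaleR_conv_of_real)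
    also have "\<dots> = t *\<^sub>R D 1" using lin by (rule linear_scale)
    finally show "(D \<circ> (\<lambda>t. complex_of_real t)) t = t *\<^sub>R D 1" .
  qed
  ultimately show "dx f z (D 1)" unfolding dx_def has_vector_derivative_def by (simp add: o_def)
  have "((f \<circ> (\<lambda>t::real. z + \<i> * complex_of_real t)) has_derivative (D \<circ> (\<lambda>t. \<i> * complex_of_real t))) (at 0)"
    by (rule diff_chain_at) (auto intro!: derivative_eq_intros assms)
  moreover have "(D \<circ> (\<lambda>t. \<i> * complex_of_real t)) = (\<lambda>t. t *\<^sub>R D \<i>)"
  proof
    fix t :: real
    have "(D \<circ> (\<lambda>t. \<i> * complex_of_real t)) t = D (t *\<^sub>R \<i>)" by (simp add: scaleR_conv_of_real mult.commute)
    also have "\<dots> = t *\<^sub>R D \<i>" using lin by (rule linear_scale)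
    finally show "(D \<circ> (\<lambda>t. \<i> * complex_of_real t)) t = t *\<^sub>R D \<i>" .
  qed
  ultimately show "dy f z (D \<i>)" unfolding dy_def has_vector_derivative_def by (simp add: o_def)
qed



lemma harmonic_compose:
  fixes f g :: "complex \<Rightarrow> complex"
  assumes hf: "harmonic_on f T" and hg: "g holomorphic_on S" and S: "open S" and gST: "g ` S \<subseteq> T"
  shows "harmonic_on (\<lambda>z. f (g z)) S"
proof -
  obtain fx fy fxx fxy fyx fyy where
    P: "\<forall>z\<in>T. dx f z (fx z) \<and> dy f z (fy z) \<and>
                dx fx z (fxx z) \<and> dy fx z (fxy z) \<and>
                dx fy z (fyx z) \<and> dy fy z (fyy z) \<and>
                fxx z + fyy z = 0" and
    C: "continuous_on T f" "continuous_on T fx" "continuous_on T fy"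
        "continuous_on T fxx" "continuous_on T fxy" "continuous_on T fyx" "continuous_on T fyy"
    and T: "open T"
    using hf unfolding harmonic_on_def by blast
  define g1 where "g1 = deriv g"
  define g2 where "g2 = deriv g1"
  have hg1: "g1 holomorphic_on S" unfolding g1_def using hg S by (rule holomorphic_deriv)
  have hg2: "g2 holomorphic_on S" unfolding g2_def using hg1 S by (rule holomorphic_deriv)
  have dg: "(g has_derivative (\<lambda>h. g1 z * h)) (at z)" if "z \<in> S" for z
    using holomorphic_derivI[OF hg S that, of UNIV] unfolding g1_def has_field_derivative_def
    by simp
  have dg1: "(g1 has_derivative (\<lambda>h. g2 z * h)) (at z)" if "z \<in> S" for z
    using holomorphic_derivI[OF hg1 S that, of UNIV] unfolding g2_def has_field_derivative_def
    by simp
  define Df where "Df w k = Re k *\<^sub>R fx w + Im k *\<^sub>R fy w" for w k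
  define Dfx where "Dfx w k = Re k *\<^sub>R fxx w + Im k *\<^sub>R fxy w" for w k
  define Dfy where "Dfy w k = Re k *\<^sub>R fyx w + Im k *\<^sub>R fyy w" for w k
  have df: "(f has_derivative Df w) (at w)" if "w \<in> T" for w
    unfolding Df_def[abs_def] using T that P C
    by (intro partials_has_derivative[of T w f fy fx]) auto
  have dfx: "(fx has_derivative Dfx w) (at w)" if "w \<in> T" for w
    unfolding Dfx_def[abs_def] using T that P C
    by (intro partials_has_derivative[of T w fx fxy fxx]) auto
  have dfy: "(fy has_derivative Dfy w) (at w)" if "w \<in> T" for w
    unfolding Dfy_def[abs_def] using T that P C
    by (intro partials_has_derivative[of T w fy fyy fyx]) auto
  define px where "px z = Re (g1 z) *\<^sub>R fx (g z) + Im (g1 z) *\<^sub>R fy (g z)" for z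
  define py where "py z = (- Im (g1 z)) *\<^sub>R fx (g z) + Re (g1 z) *\<^sub>R fy (g z)" for z
  define Dpx where "Dpx z h = Re (g1 z) *\<^sub>R Dfx (g z) (g1 z * h) + Re (g2 z * h) *\<^sub>R fx (g z) +
     (Im (g1 z) *\<^sub>R Dfy (g z) (g1 z * h) + Im (g2 z * h) *\<^sub>R fy (g z))" for z h
  define Dpy where "Dpy z h = (- Im (g1 z)) *\<^sub>R Dfx (g z) (g1 z * h) + (- Im (g2 z * h)) *\<^sub>R fx (g z) +
     (Re (g1 z) *\<^sub>R Dfy (g z) (g1 z * h) + Re (g2 z * h) *\<^sub>R fy (g z))" for z h
  have dpsi: "((\<lambda>z. f (g z)) has_derivative (\<lambda>h. Df (g z) (g1 z * h))) (at z)" if "z \<in> S" for z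
    using has_derivative_compose[OF dg[OF that] df] gST that by auto
  have dpx: "(px has_derivative Dpx z) (at z)" if "z \<in> S" for z
  proof -
    have gz: "g z \<in> T" using gST that by auto
    have "((\<lambda>z. Re (g1 z) *\<^sub>R fx (g z) + Im (g1 z) *\<^sub>R fy (g z)) has_derivative Dpx z) (at z)"
      unfolding Dpx_def[abs_def]
      by (intro has_derivative_add has_derivative_scaleR has_derivative_Re has_derivative_Im
          dg1[OF that] has_derivative_compose[OF dg[OF that] dfx[OF gz]]
          has_derivative_compose[OF dg[OF that] dfy[OF gz]])
    then show ?thesis unfolding px_def[abs_def] .
  qed
  have dpy: "(py has_derivative Dpy z) (at z)" if "z \<in> S" for z
  proof -
    have gz: "g z \<in> T" using gST that by auto
    have "((\<lambda>z. (- Im (g1 z)) *\<^sub>R fx (g z) + Re (g1 z) *\<^sub>R fy (g z)) has_derivative Dpy z) (at z)"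
      unfolding Dpy_def[abs_def]
      by (intro has_derivative_add has_derivative_scaleR has_derivative_Re has_derivative_Im has_derivative_minus
          dg1[OF that] has_derivative_compose[OF dg[OF that] dfx[OF gz]]
          has_derivative_compose[OF dg[OF that] dfy[OF gz]])
    then show ?thesis unfolding py_def[abs_def] .
  qed
  have cg: "continuous_on S g" "continuous_on S g1" "continuous_on S g2"
    using hg hg1 hg2 holomorphic_on_imp_continuous_on by blast+
  have cc: "continuous_on S (\<lambda>z. h (g z))" if "continuous_on T h" for h
    by (rule continuous_on_compose2[OF that cg(1) gST])
  show ?thesis
    unfolding harmonic_on_def
  proof (rule conjI[OF S], rule exI[of _ px], rule exI[of _ py], rule exI[of _ "\<lambda>z. Dpx z 1"], rule exI[of _ "\<lambda>z. Dpx z \<i>"],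
      rule exI[of _ "\<lambda>z. Dpy z 1"], rule exI[of _ "\<lambda>z. Dpy z \<i>"], intro conjI ballI)
    fix z assume z: "z \<in> S"
    have gz: "g z \<in> T" using gST z by auto
    show "dx (\<lambda>z. f (g z)) z (px z)"
      using has_derivative_dx_dy(1)[OF dpsi[OF z]] by (simp add: px_def Df_def)
    show "dy (\<lambda>z. f (g z)) z (py z)"
      using has_derivative_dx_dy(2)[OF dpsi[OF z]] by (simp add: py_def Df_def)
    show "dx px z (Dpx z 1)" using has_derivative_dx_dy(1)[OF dpx[OF z]] .
    show "dy px z (Dpx z \<i>)" using has_derivative_dx_dy(2)[OF dpx[OF z]] .
    show "dx py z (Dpy z 1)" using has_derivative_dx_dy(1)[OF dpy[OF z]] .
    show "dy py z (Dpy z \<i>)" using has_derivative_dx_dy(2)[OF dpy[OF z]] .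
    have lap: "fyy (g z) = - fxx (g z)" using P gz by (simp add: eq_neg_iff_add_eq_0 add.commute)
    show "Dpx z 1 + Dpy z \<i> = 0"
      unfolding Dpx_def Dpy_def Dfx_def Dfy_def lap
      by (simp add: scaleR_conv_of_real algebra_simps)
  next
    show "continuous_on S (\<lambda>z. f (g z))" using cc C by blast
    show "continuous_on S px" unfolding px_def[abs_def]
      using cc C cg by (intro continuous_intros) auto
    show "continuous_on S py" unfolding py_def[abs_def]
      using cc C cg by (intro continuous_intros) auto
    show "continuous_on S (\<lambda>z. Dpx z 1)" "continuous_on S (\<lambda>z. Dpx z \<i>)"
      "continuous_on S (\<lambda>z. Dpy z 1)" "continuous_on S (\<lambda>z. Dpy z \<i>)"
      unfolding Dpx_def Dpy_def Dfx_def Dfy_def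
      using cc C cg by (intro continuous_intros; auto)+
  qed
qed



lemma norm_sin_le_exp: "cmod (sin z) \<le> exp (cmod z)"
proof -
  have "cmod (sin z) = cmod (exp (\<i> * z) - exp (-(\<i> * z))) / 2"
    unfolding sin_exp_eq by (simp add: norm_divide norm_mult)
  also have "\<dots> \<le> (cmod (exp (\<i> * z)) + cmod (exp (-(\<i> * z)))) / 2"
    by (intro divide_right_mono norm_triangle_ineq4) simp
  also have "\<dots> \<le> (exp (cmod z) + exp (cmod z)) / 2"
  proof -
    have n1: "cmod (\<i> * z) = cmod z" "cmod (-(\<i> * z)) = cmod z" by (simp_all add: norm_mult)
    have "cmod (exp (\<i> * z)) \<le> exp (cmod z)" using norm_exp[of "\<i> * z"] n1 by metis
    moreover have "cmod (exp (-(\<i> * z))) \<le> exp (cmod z)" using norm_exp[of "-(\<i> * z)"] n1 by metis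
    ultimately show ?thesis by (intro divide_right_mono add_mono) auto
  qed
  finally show ?thesis by simp
qed

lemma cos_minus_one_bound: assumes "cmod u \<le> 1" shows "cmod (cos u - 1) \<le> 3 * cmod u"
proof -
  have "cmod (cos u - cos 0) \<le> 3 * cmod (u - 0)"
  proof (rule field_differentiable_bound[of "cball 0 1" cos "\<lambda>x. - sin x"])
    show "convex (cball (0::complex) 1)" by simp
    fix x :: complex assume x: "x \<in> cball 0 1"
    show "(cos has_field_derivative - sin x) (at x within cball 0 1)"
      by (auto intro!: derivative_eq_intros)
    have "cmod (sin x) \<le> exp (cmod x)" by (rule norm_sin_le_exp)
    also have "\<dots> \<le> exp 1" using x by simp
    also have "\<dots> \<le> 3" by (rule exp_le)
    finally show "cmod (- sin x) \<le> 3" by simp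
  qed (use assms in auto)
  then show ?thesis by simp
qed

lemma sin_minus_id_bound: assumes "cmod z \<le> 1" shows "cmod (sin z - z) \<le> 3 * (cmod z)\<^sup>2"
proof -
  have "cmod ((sin z - z) - (sin 0 - 0)) \<le> (3 * cmod z) * cmod (z - 0)"
  proof (rule field_differentiable_bound[of "cball 0 (cmod z)" "\<lambda>u. sin u - u" "\<lambda>u. cos u - 1"])
    show "convex (cball (0::complex) (cmod z))" by simp
    fix x :: complex assume x: "x \<in> cball 0 (cmod z)"
    show "((\<lambda>u. sin u - u) has_field_derivative cos x - 1) (at x within cball 0 (cmod z))"
      by (auto intro!: derivative_eq_intros)
    have "cmod x \<le> cmod z" using x by simp
    then show "cmod (cos x - 1) \<le> 3 * cmod z"
      using cos_minus_one_bound[of x] assms by linarith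
  qed auto
  then show ?thesis by (simp add: power2_eq_square)
qed

definition Gt :: "real \<Rightarrow> complex \<Rightarrow> complex" where
  "Gt \<theta> w = of_real (pi / (2 * sinh \<theta>)) * sin (of_real (2 * \<theta> / pi) * w)"

definition FF :: "real \<Rightarrow> complex \<Rightarrow> complex" where
  "FF \<theta> u = exp (Gt \<theta> (Ln u))"

lemma Gt_Im: assumes th: "\<theta> > 0" and w: "\<bar>Im w\<bar> < pi / 2"
  shows "\<bar>Im (Gt \<theta> w)\<bar> < pi / 2"
proof -
  define s where "s = 2 * \<theta> / pi"
  have s: "s > 0" using th by (simp add: s_def)
  have imsin: "Im (sin x) = cos (Re x) * sinh (Im x)" for x by (simp add: Im_sin sinh_field_def)
  have "Im (Gt \<theta> w) = (pi / (2 * sinh \<theta>)) * Im (sin (of_real s * w))"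
    unfolding Gt_def s_def[symmetric] by simp
  also have "\<dots> = (pi / (2 * sinh \<theta>)) * (cos (s * Re w) * sinh (s * Im w))"
    unfolding imsin by simp
  finally have "Im (Gt \<theta> w) = (pi / (2 * sinh \<theta>)) * (cos (s * Re w) * sinh (s * Im w))" .
  then have "\<bar>Im (Gt \<theta> w)\<bar> = (pi / (2 * sinh \<theta>)) * (\<bar>cos (s * Re w)\<bar> * \<bar>sinh (s * Im w)\<bar>)"
    using th by (simp add: abs_mult)
  also have "\<dots> \<le> (pi / (2 * sinh \<theta>)) * \<bar>sinh (s * Im w)\<bar>"
    using th by (intro mult_left_mono) (auto intro!: mult_left_le_one_le abs_cos_le_one)
  also have "\<dots> < (pi / (2 * sinh \<theta>)) * sinh \<theta>"
  proof -
    have "\<bar>s * Im w\<bar> < s * (pi / 2)" using s w by (simp add: abs_mult)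
    also have "\<dots> = \<theta>" by (simp add: s_def)
    finally have "sinh \<bar>s * Im w\<bar> < sinh \<theta>" by (simp only: sinh_real_less_iff)
    then have "\<bar>sinh (s * Im w)\<bar> < sinh \<theta>" by simp
    then show ?thesis using th by (intro mult_strict_left_mono) auto
  qed
  also have "\<dots> = pi / 2" using th by simp
  finally show ?thesis .
qed

lemma FF_Re: assumes "\<theta> > 0" "Re u > 0" shows "Re (FF \<theta> u) > 0"
proof -
  have "\<bar>Im (Ln u)\<bar> < pi / 2" using assms(2) by (rule Re_Ln_pos_lt_imp)
  then have "\<bar>Im (Gt \<theta> (Ln u))\<bar> < pi / 2" by (rule Gt_Im[OF assms(1)])
  then have "cos (Im (Gt \<theta> (Ln u))) > 0" by (intro cos_gt_zero_pi) auto
  then show ?thesis unfolding FF_def Re_exp by simp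
qed

lemma sin_shift_2pi: assumes "p = 2 * pi \<or> p = - (2 * pi)"
  shows "sin (complex_of_real p + x) = sin x"
proof -
  have "sin p = 0" "cos p = 1" using assms by auto
  moreover have "sin (complex_of_real p) = of_real (sin p)" "cos (complex_of_real p) = of_real (cos p)"
    by (rule sin_of_real, rule cos_of_real)
  ultimately show ?thesis by (simp add: sin_add)
qed

lemma Gt_periodic: assumes "\<bar>2 * \<theta> / pi * c\<bar> = 2 * pi"
  shows "Gt \<theta> (of_real c + w) = Gt \<theta> w"
proof -
  have p: "2 * \<theta> / pi * c = 2 * pi \<or> 2 * \<theta> / pi * c = - (2 * pi)" using assms by linarith
  have "of_real (2 * \<theta> / pi) * (of_real c + w) = of_real (2 * \<theta> / pi * c) + of_real (2 * \<theta> / pi) * w"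
    by (simp add: field_simps)
  then show ?thesis unfolding Gt_def using sin_shift_2pi[OF p] by simp
qed

lemma FF_periodic:
  assumes k: "k \<ge> 1" and kap: "kap > 0" "kap \<noteq> 1"
    and th: "\<theta> = pi\<^sup>2 / (real k * \<bar>ln kap\<bar>)" and u: "u \<noteq> 0"
  shows "FF \<theta> (of_real (kap ^ k) * u) = FF \<theta> u"
proof -
  have L: "ln kap \<noteq> 0" using kap by simp
  have "Ln (of_real (kap ^ k) * u) = of_real (ln (kap ^ k)) + Ln u"
    using Ln_times_of_real[of "kap ^ k" u] kap u by (simp add: Ln_of_real del: of_real_power)
  also have "ln (kap ^ k) = real k * ln kap" using kap by (simp add: ln_realpow)
  finally have "Ln (of_real (kap ^ k) * u) = of_real (real k * ln kap) + Ln u" .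
  moreover have "\<bar>2 * \<theta> / pi * (real k * ln kap)\<bar> = 2 * pi"
    using k L unfolding th by (simp add: abs_mult power2_eq_square field_simps)
  ultimately show ?thesis unfolding FF_def by (metis Gt_periodic)
qed

lemma theta_sinh_lim: "((\<lambda>\<theta>::real. \<theta> / sinh \<theta>) \<longlongrightarrow> 1) (at_right 0)"
  by real_asymp

lemma Gt_approx: assumes R: "R > 0" and eta: "\<eta> > 0"
  shows "eventually (\<lambda>\<theta>. \<forall>w. cmod w \<le> R \<longrightarrow> cmod (Gt \<theta> w - w) < \<eta>) (at_right 0)"
proof -
  have ev1: "eventually (\<lambda>\<theta>. \<bar>\<theta> / sinh \<theta> - 1\<bar> < \<eta> / (8 * R)) (at_right 0)"
    using theta_sinh_lim R eta unfolding tendsto_iff dist_real_def by auto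
  have ev2: "eventually (\<lambda>\<theta>::real. 0 < \<theta> \<and> \<theta> < min (pi / (2 * R)) (\<eta> * pi / (12 * R\<^sup>2))) (at_right 0)"
    using eventually_at_right_real[of 0 "min (pi / (2 * R)) (\<eta> * pi / (12 * R\<^sup>2))"] R eta
    by simp
  show ?thesis using ev1 ev2
  proof eventually_elim
    case (elim \<theta>)
    then have th: "\<theta> > 0" and c1: "\<bar>\<theta> / sinh \<theta> - 1\<bar> < \<eta> / (8 * R)"
      and th1: "\<theta> < pi / (2 * R)" and th2: "\<theta> < \<eta> * pi / (12 * R\<^sup>2)" by auto
    define s where "s = 2 * \<theta> / pi"
    define c where "c = \<theta> / sinh \<theta>"
    have s: "s > 0" using th by (simp add: s_def)
    have sR: "s * R < 1" using th1 R by (simp add: s_def field_simps)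
    have sR2: "3 * s * R\<^sup>2 < \<eta> / 2" using th2 R by (simp add: s_def field_simps power2_eq_square)
    show ?case
    proof (intro allI impI)
      fix w assume w: "cmod w \<le> R"
      have Geq: "Gt \<theta> w = of_real c * (sin (of_real s * w) / of_real s)"
        using th unfolding Gt_def c_def s_def by (simp add: field_simps)
      have nsw: "cmod (of_real s * w) \<le> 1"
      proof -
        have "cmod (of_real s * w) = s * cmod w" using s by (simp add: norm_mult)
        also have "\<dots> \<le> s * R" using w s by (simp add: mult_left_mono)
        finally show ?thesis using sR by simp
      qed
      have b1: "cmod (sin (of_real s * w) / of_real s - w) \<le> 3 * s * R\<^sup>2"
      proof -
        have "sin (of_real s * w) / of_real s - w = (sin (of_real s * w) - of_real s * w) / of_real s"
          using s by (simp add: field_simps)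
        then have "cmod (sin (of_real s * w) / of_real s - w) = cmod (sin (of_real s * w) - of_real s * w) / s"
          using s by (simp add: norm_divide)
        also have "\<dots> \<le> 3 * (cmod (of_real s * w))\<^sup>2 / s"
          using sin_minus_id_bound[OF nsw] s by (simp add: divide_right_mono)
        also have "\<dots> = 3 * s * (cmod w)\<^sup>2" using s by (simp add: norm_mult power2_eq_square)
        also have "\<dots> \<le> 3 * s * R\<^sup>2" using s w by (intro mult_left_mono power_mono) auto
        finally show ?thesis .
      qed
      have b2: "cmod (sin (of_real s * w) / of_real s) \<le> 4 * R"
      proof -
        have "cmod (sin (of_real s * w) / of_real s) \<le> cmod w + cmod (sin (of_real s * w) / of_real s - w)"
          by (metis add.commute diff_add_cancel norm_triangle_ineq)
        also have "\<dots> \<le> R + 3 * s * R\<^sup>2" using w b1 by linarith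
        also have "3 * s * R\<^sup>2 = 3 * R * (s * R)" by (simp add: power2_eq_square)
        also have "\<dots> \<le> 3 * R" using sR R by (simp add: mult_left_le)
        finally show ?thesis by simp
      qed
      have "Gt \<theta> w - w = of_real (c - 1) * (sin (of_real s * w) / of_real s) + (sin (of_real s * w) / of_real s - w)"
        unfolding Geq by (simp add: algebra_simps del: times_divide_eq_right)
      then have "cmod (Gt \<theta> w - w) \<le> \<bar>c - 1\<bar> * cmod (sin (of_real s * w) / of_real s) + cmod (sin (of_real s * w) / of_real s - w)"
        by (metis norm_mult norm_of_real norm_triangle_ineq)
      also have "\<dots> \<le> \<eta> / (8 * R) * (4 * R) + 3 * s * R\<^sup>2"
        using c1 b1 b2 unfolding c_def by (intro add_mono mult_mono) auto
      also have "\<dots> < \<eta>" using sR2 R by (simp add: field_simps)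
      finally show "cmod (Gt \<theta> w - w) < \<eta>" .
    qed
  qed
qed



lemma Re_cayley: assumes "cmod c = 1" "z \<noteq> c"
  shows "Re ((c + z) / (c - z)) = (1 - (cmod z)\<^sup>2) / (cmod (c - z))\<^sup>2"
proof -
  have c: "(Re c)\<^sup>2 + (Im c)\<^sup>2 = 1" using assms(1) by (simp add: cmod_def)
  have "Re ((c + z) / (c - z)) = (Re (c + z) * Re (c - z) + Im (c + z) * Im (c - z)) / (cmod (c - z))\<^sup>2"
    by (simp add: Re_divide cmod_power2)
  also have "Re (c + z) * Re (c - z) + Im (c + z) * Im (c - z) = 1 - (cmod z)\<^sup>2"
    using c unfolding cmod_power2 by (simp add: algebra_simps power2_eq_square)
  finally show ?thesis .
qed

lemma frac_cancel_aux:
  fixes c p q r N :: complex and A B :: real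
  assumes "N \<noteq> 0" "B \<noteq> 0"
  shows "2 * c * (p * of_real A / N) / ((- (q * of_real B / N)) * r) = of_real (A / B) * (2 * c * p / ((- q) * r))"
  using assms by (simp add: field_simps)

lemma moeb_norm_identity:
  "(cmod (\<alpha> * z + \<beta>))\<^sup>2 - (cmod (cnj \<beta> * z + cnj \<alpha>))\<^sup>2 = ((cmod \<alpha>)\<^sup>2 - (cmod \<beta>)\<^sup>2) * ((cmod z)\<^sup>2 - 1)"
  unfolding cmod_power2 by (simp add: power2_eq_square algebra_simps)

lemma unif_near:
  fixes f :: "complex \<Rightarrow> complex"
  assumes f: "continuous_on U f" and U: "open U" and C: "compact C" "C \<subseteq> U" and eta: "\<eta> > 0"
  shows "\<exists>\<delta>>0. \<forall>x\<in>C. \<forall>y. dist y x < \<delta> \<longrightarrow> y \<in> U \<and> dist (f y) (f x) < \<eta>"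
proof -
  obtain \<rho> where rho: "\<rho> > 0" "(\<Union>x\<in>C. cball x \<rho>) \<subseteq> U"
    using compact_subset_open_imp_cball_epsilon_subset[OF C(1) U C(2)] by blast
  define K where "K = {x + y | x y. x \<in> C \<and> y \<in> cball 0 \<rho>}"
  have cK: "compact K" unfolding K_def by (intro compact_sums C(1) compact_cball)
  have KU: "K \<subseteq> U"
  proof
    fix v assume "v \<in> K"
    then obtain x y where v: "v = x + y" "x \<in> C" "y \<in> cball 0 \<rho>" unfolding K_def by blast
    then have "v \<in> cball x \<rho>" by (simp add: dist_norm)
    then show "v \<in> U" using rho v by blast
  qed
  have "uniformly_continuous_on K f"
    by (rule compact_uniformly_continuous[OF continuous_on_subset[OF f KU] cK])
  then obtain d where d: "d > 0" "\<And>x x'. x \<in> K \<Longrightarrow> x' \<in> K \<Longrightarrow> dist x' x < d \<Longrightarrow> dist (f x') (f x) < \<eta>"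
    unfolding uniformly_continuous_on_def using eta by metis
  show ?thesis
  proof (intro exI[of _ "min \<rho> d"] conjI ballI allI impI)
    show "min \<rho> d > 0" using rho d by simp
    fix x y assume x: "x \<in> C" and y: "dist y x < min \<rho> d"
    have yx: "y - x \<in> cball 0 \<rho>" using y by (simp add: dist_norm norm_minus_commute)
    have yK: "y \<in> K" unfolding K_def mem_Collect_eq
      by (rule exI[of _ x], rule exI[of _ "y - x"]) (use x yx in auto)
    have xK: "x \<in> K" unfolding K_def mem_Collect_eq
      by (rule exI[of _ x], rule exI[of _ 0]) (use x rho in auto)
    show "y \<in> U" using yK KU by blast
    show "dist (f y) (f x) < \<eta>" using d(2)[OF xK yK] y by simp
  qed
qed

context
  fixes \<alpha> \<beta> :: complex
  assumes hyp: "hyperbolic \<alpha> \<beta>"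
begin

definition "dd = sqrt ((Re \<alpha>)\<^sup>2 - 1)"
definition "z1 = (\<i> * of_real (Im \<alpha>) + of_real dd) / cnj \<beta>"
definition "z2 = (\<i> * of_real (Im \<alpha>) - of_real dd) / cnj \<beta>"
definition "kap = (Re \<alpha> - dd) / (Re \<alpha> + dd)"
definition "tau = (z2 + z1) / (z2 - z1)"
definition "WW z = (z2 + z) / (z2 - z) - tau" for z
definition "WI u = z2 * (u + tau - 1) / (u + tau + 1)" for u
definition "NN z = cnj \<beta> * z + cnj \<alpha>" for z

lemma ab: "(cmod \<alpha>)\<^sup>2 - (cmod \<beta>)\<^sup>2 = 1" "\<bar>Re \<alpha>\<bar> > 1"
  using hyp unfolding hyperbolic_def by auto

lemma dd: "dd > 0" "dd\<^sup>2 = (Re \<alpha>)\<^sup>2 - 1" "dd < \<bar>Re \<alpha>\<bar>"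
proof -
  have "1 * 1 < \<bar>Re \<alpha>\<bar> * \<bar>Re \<alpha>\<bar>" using ab(2) by (intro mult_strict_mono) auto
  then have r: "(Re \<alpha>)\<^sup>2 > 1" by (simp add: power2_eq_square)
  then show "dd > 0" "dd\<^sup>2 = (Re \<alpha>)\<^sup>2 - 1" unfolding dd_def by simp_all
  then have "dd\<^sup>2 < \<bar>Re \<alpha>\<bar>\<^sup>2" by simp
  then show "dd < \<bar>Re \<alpha>\<bar>" by (rule power2_less_imp_less) simp
qed

lemma beta_sq: "(Im \<alpha>)\<^sup>2 + dd\<^sup>2 = (cmod \<beta>)\<^sup>2"
  using ab(1) dd(2) by (simp add: cmod_power2)

lemma beta_nz: "\<beta> \<noteq> 0"
proof
  assume "\<beta> = 0"
  with beta_sq have "(Im \<alpha>)\<^sup>2 + dd\<^sup>2 = 0" by simp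
  moreover have "dd\<^sup>2 > 0" using dd(1) by simp
  moreover have "(Im \<alpha>)\<^sup>2 \<ge> 0" by simp
  ultimately show False by linarith
qed

lemma z1_eq: "cnj \<beta> * z1 = \<i> * of_real (Im \<alpha>) + of_real dd"
  using beta_nz by (simp add: z1_def)
lemma z2_eq: "cnj \<beta> * z2 = \<i> * of_real (Im \<alpha>) - of_real dd"
  using beta_nz by (simp add: z2_def)

lemma norm_z: "cmod z1 = 1" "cmod z2 = 1"
proof -
  have "cmod (\<i> * of_real (Im \<alpha>) + of_real dd) = cmod \<beta>"
    using beta_sq by (simp add: cmod_def)
  then show "cmod z1 = 1" using beta_nz by (simp add: z1_def norm_divide)
  have "cmod (\<i> * of_real (Im \<alpha>) - of_real dd) = cmod \<beta>"
    using beta_sq by (simp add: cmod_def)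
  then show "cmod z2 = 1" using beta_nz by (simp add: z2_def norm_divide)
qed

lemma z12_ne: "z1 \<noteq> z2"
proof
  assume "z1 = z2"
  then have "cnj \<beta> * z1 = cnj \<beta> * z2" by simp
  then show False using dd(1) unfolding z1_eq z2_eq by (simp add: complex_eq_iff)
qed

lemma z1_fix: "z1 * (\<i> * of_real (Im \<alpha>) - of_real dd) = - \<beta>"
proof -
  have "cnj \<beta> * (z1 * (\<i> * of_real (Im \<alpha>) - of_real dd)) = (\<i> * of_real (Im \<alpha>) + of_real dd) * (\<i> * of_real (Im \<alpha>) - of_real dd)"
    using z1_eq by (simp add: mult.assoc[symmetric])
  also have "\<dots> = - of_real ((Im \<alpha>)\<^sup>2 + dd\<^sup>2)" by (simp add: algebra_simps power2_eq_square)
  also have "\<dots> = - (\<beta> * cnj \<beta>)" unfolding beta_sq complex_norm_square ..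
  also have "\<dots> = cnj \<beta> * (- \<beta>)" by simp
  finally have "cnj \<beta> * (z1 * (\<i> * of_real (Im \<alpha>) - of_real dd)) = cnj \<beta> * (- \<beta>)" .
  then show ?thesis using beta_nz by (metis complex_cnj_zero_iff mult_cancel_left)
qed

lemma z2_fix: "z2 * (\<i> * of_real (Im \<alpha>) + of_real dd) = - \<beta>"
proof -
  have "cnj \<beta> * (z2 * (\<i> * of_real (Im \<alpha>) + of_real dd)) = (\<i> * of_real (Im \<alpha>) - of_real dd) * (\<i> * of_real (Im \<alpha>) + of_real dd)"
    using z2_eq by (simp add: mult.assoc[symmetric])
  also have "\<dots> = - of_real ((Im \<alpha>)\<^sup>2 + dd\<^sup>2)" by (simp add: algebra_simps power2_eq_square)
  also have "\<dots> = - (\<beta> * cnj \<beta>)" unfolding beta_sq complex_norm_square ..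
  also have "\<dots> = cnj \<beta> * (- \<beta>)" by simp
  finally have "cnj \<beta> * (z2 * (\<i> * of_real (Im \<alpha>) + of_real dd)) = cnj \<beta> * (- \<beta>)" .
  then show ?thesis using beta_nz by (metis complex_cnj_zero_iff mult_cancel_left)
qed

lemma alpha_cnj: "\<alpha> - cnj \<alpha> = 2 * \<i> * of_real (Im \<alpha>)"
  by (simp add: complex_eq_iff)

lemma moeb_sub_z1: assumes "NN z \<noteq> 0"
  shows "moeb \<alpha> \<beta> z - z1 = (z - z1) * of_real (Re \<alpha> - dd) / NN z"
proof -
  have "\<alpha>*z + \<beta> - z1*(cnj \<beta>*z + cnj \<alpha>) - (z - z1)*(\<alpha> - (\<i> * of_real (Im \<alpha>) + of_real dd))
     = (\<beta> + z1*(\<i> * of_real (Im \<alpha>) - of_real dd)) + z1*((\<alpha> - cnj \<alpha>) - 2 * \<i> * of_real (Im \<alpha>))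
       - z*(cnj \<beta> * z1 - (\<i> * of_real (Im \<alpha>) + of_real dd))"
    by (simp add: algebra_simps)
  also have "\<dots> = 0" using z1_fix z1_eq alpha_cnj by simp
  finally have e: "\<alpha>*z + \<beta> - z1*(cnj \<beta>*z + cnj \<alpha>) = (z - z1)*(\<alpha> - (\<i> * of_real (Im \<alpha>) + of_real dd))"
    by simp
  have a: "\<alpha> - (\<i> * of_real (Im \<alpha>) + of_real dd) = of_real (Re \<alpha> - dd)" by (simp add: complex_eq_iff)
  have "moeb \<alpha> \<beta> z - z1 = (\<alpha>*z + \<beta> - z1*(cnj \<beta>*z + cnj \<alpha>)) / NN z"
    using assms unfolding moeb_def NN_def by (simp add: diff_divide_distrib)
  then show ?thesis unfolding e a .
qed

lemma moeb_sub_z2: assumes "NN z \<noteq> 0"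
  shows "moeb \<alpha> \<beta> z - z2 = (z - z2) * of_real (Re \<alpha> + dd) / NN z"
proof -
  have "\<alpha>*z + \<beta> - z2*(cnj \<beta>*z + cnj \<alpha>) - (z - z2)*(\<alpha> - (\<i> * of_real (Im \<alpha>) - of_real dd))
     = (\<beta> + z2*(\<i> * of_real (Im \<alpha>) + of_real dd)) + z2*((\<alpha> - cnj \<alpha>) - 2 * \<i> * of_real (Im \<alpha>))
       - z*(cnj \<beta> * z2 - (\<i> * of_real (Im \<alpha>) - of_real dd))"
    by (simp add: algebra_simps)
  also have "\<dots> = 0" using z2_fix z2_eq alpha_cnj by simp
  finally have e: "\<alpha>*z + \<beta> - z2*(cnj \<beta>*z + cnj \<alpha>) = (z - z2)*(\<alpha> - (\<i> * of_real (Im \<alpha>) - of_real dd))"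
    by simp
  have a: "\<alpha> - (\<i> * of_real (Im \<alpha>) - of_real dd) = of_real (Re \<alpha> + dd)" by (simp add: complex_eq_iff)
  have "moeb \<alpha> \<beta> z - z2 = (\<alpha>*z + \<beta> - z2*(cnj \<beta>*z + cnj \<alpha>)) / NN z"
    using assms unfolding moeb_def NN_def by (simp add: diff_divide_distrib)
  then show ?thesis unfolding e a .
qed

lemma moeb_ball: assumes "cmod z < 1"
  shows "NN z \<noteq> 0" "cmod (moeb \<alpha> \<beta> z) < 1"
proof -
  have id: "(cmod (\<alpha> * z + \<beta>))\<^sup>2 - (cmod (NN z))\<^sup>2 = (cmod z)\<^sup>2 - 1"
    using moeb_norm_identity[of \<alpha> z \<beta>] ab(1) unfolding NN_def by simp
  have "(cmod z)\<^sup>2 < 1" using assms by (simp add: power_less_one_iff abs_square_less_1)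
  then have lt: "(cmod (\<alpha> * z + \<beta>))\<^sup>2 < (cmod (NN z))\<^sup>2" using id by linarith
  then have "(cmod (NN z))\<^sup>2 > 0" by (smt (verit) zero_le_power2)
  then show nz: "NN z \<noteq> 0" by auto
  have "cmod (\<alpha> * z + \<beta>) < cmod (NN z)" using lt by (rule power2_less_imp_less) simp
  then show "cmod (moeb \<alpha> \<beta> z) < 1" using nz unfolding moeb_def NN_def[symmetric]
    by (simp add: norm_divide divide_less_eq)
qed

lemma kap: "kap > 0" "kap \<noteq> 1"
proof -
  show "kap > 0" unfolding kap_def
  proof (cases "Re \<alpha> > 0")
    case True
    then show "0 < (Re \<alpha> - dd) / (Re \<alpha> + dd)" using dd(1,3) by (intro divide_pos_pos) auto
  next
    case False
    then show "0 < (Re \<alpha> - dd) / (Re \<alpha> + dd)" using dd(1,3) by (intro divide_neg_neg) auto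
  qed
  show "kap \<noteq> 1" unfolding kap_def using dd(1,3) by (auto simp: divide_eq_1_iff)
qed

lemma z2_not_ball: "cmod z < 1 \<Longrightarrow> z \<noteq> z2"
  using norm_z by auto

lemma Re_tau: "Re tau = 0"
  using Re_cayley[OF norm_z(2), of z1] z12_ne norm_z unfolding tau_def by simp

lemma Re_WW: "cmod z < 1 \<Longrightarrow> Re (WW z) > 0"
proof -
  assume z: "cmod z < 1"
  have "Re (WW z) = (1 - (cmod z)\<^sup>2) / (cmod (z2 - z))\<^sup>2"
    unfolding WW_def using Re_cayley[OF norm_z(2), of z] z2_not_ball[OF z] Re_tau by simp
  moreover have "(cmod z)\<^sup>2 < 1" using z by (simp add: abs_square_less_1)
  moreover have "cmod (z2 - z) > 0" using z2_not_ball[OF z] by simp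
  ultimately show ?thesis by simp
qed

lemma WW_alt: "z \<noteq> z2 \<Longrightarrow> WW z = 2 * z2 * (z - z1) / ((z2 - z) * (z2 - z1))"
  using z12_ne unfolding WW_def tau_def
  by (simp add: field_simps)

lemma WW_moeb: assumes z: "cmod z < 1"
  shows "WW (moeb \<alpha> \<beta> z) = of_real kap * WW z"
proof -
  have nz: "NN z \<noteq> 0" and mz: "cmod (moeb \<alpha> \<beta> z) < 1" using moeb_ball[OF z] by auto
  have p: "Re \<alpha> + dd \<noteq> 0" using dd by auto
  have "WW (moeb \<alpha> \<beta> z) = 2 * z2 * (moeb \<alpha> \<beta> z - z1) / ((- (moeb \<alpha> \<beta> z - z2)) * (z2 - z1))"
    using WW_alt[OF z2_not_ball[OF mz]] by simp
  also have "\<dots> = 2 * z2 * ((z - z1) * of_real (Re \<alpha> - dd) / NN z) / ((- ((z - z2) * of_real (Re \<alpha> + dd) / NN z)) * (z2 - z1))"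
    unfolding moeb_sub_z1[OF nz] moeb_sub_z2[OF nz] ..
  also have "\<dots> = of_real kap * (2 * z2 * (z - z1) / ((z2 - z) * (z2 - z1)))"
    using nz p z12_ne z2_not_ball[OF z] unfolding kap_def
    by (subst frac_cancel_aux) auto
  also have "\<dots> = of_real kap * WW z" using WW_alt[OF z2_not_ball[OF z]] by simp
  finally show ?thesis .
qed

lemma WI_props: assumes "Re u > 0"
  shows "u + tau + 1 \<noteq> 0" "cmod (WI u) < 1"
proof -
  let ?v = "u + tau"
  have rv: "Re ?v = Re u" using Re_tau by simp
  show nz: "u + tau + 1 \<noteq> 0" using assms rv by (auto simp: complex_eq_iff)
  have "(cmod (?v - 1))\<^sup>2 < (cmod (?v + 1))\<^sup>2" using assms rv
    unfolding cmod_power2 by (simp add: power2_eq_square algebra_simps)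
  then have "cmod (?v - 1) < cmod (?v + 1)" by (rule power2_less_imp_less) simp
  then show "cmod (WI u) < 1" unfolding WI_def using nz norm_z
    by (simp add: norm_divide norm_mult divide_less_eq add.assoc)
qed

lemma WI_WW: assumes z: "cmod z < 1" shows "WI (WW z) = z"
proof -
  have n: "z2 - z \<noteq> 0" "z2 \<noteq> 0" using z2_not_ball[OF z] norm_z by auto
  show ?thesis unfolding WI_def WW_def using n
    by (simp add: field_simps)
qed

definition "gk \<theta> z = WI (FF \<theta> (WW z))" for \<theta> z

lemma WW_holo: "WW holomorphic_on ball 0 1"
proof -
  have "(\<lambda>z. (z2 + z) / (z2 - z) - tau) holomorphic_on ball 0 1"
    by (intro holomorphic_intros) (use z2_not_ball in auto)
  then show ?thesis unfolding WW_def[abs_def] .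
qed

lemma WI_holo: "WI holomorphic_on {u. Re u > 0}"
proof -
  have "(\<lambda>u. z2 * (u + tau - 1) / (u + tau + 1)) holomorphic_on {u. Re u > 0}"
    by (intro holomorphic_intros) (use WI_props(1) in auto)
  then show ?thesis unfolding WI_def[abs_def] .
qed

lemma FF_holo: "FF \<theta> holomorphic_on {u. Re u > 0}"
proof -
  have "(\<lambda>u. exp (of_real (pi / (2 * sinh \<theta>)) * sin (of_real (2 * \<theta> / pi) * Ln u))) holomorphic_on {u. Re u > 0}"
    by (intro holomorphic_intros) (auto simp: complex_nonpos_Reals_iff)
  then show ?thesis unfolding FF_def[abs_def] Gt_def .
qed

lemma gk_holo: assumes "\<theta> > 0" shows "gk \<theta> holomorphic_on ball 0 1"
proof -
  have "(WI \<circ> (FF \<theta> \<circ> WW)) holomorphic_on ball 0 1"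
  proof (rule holomorphic_on_compose_gen[OF _ WI_holo])
    show "(FF \<theta> \<circ> WW) holomorphic_on ball 0 1"
      by (rule holomorphic_on_compose_gen[OF WW_holo FF_holo]) (auto intro: Re_WW)
    show "(FF \<theta> \<circ> WW) ` ball 0 1 \<subseteq> {u. 0 < Re u}"
      using FF_Re[OF assms] Re_WW by auto
  qed
  then show ?thesis unfolding gk_def[abs_def] o_def .
qed

lemma gk_ball: assumes "\<theta> > 0" "cmod z < 1" shows "cmod (gk \<theta> z) < 1"
  unfolding gk_def using WI_props(2) FF_Re[OF assms(1)] Re_WW[OF assms(2)] by blast

lemma moeb_iter: assumes "cmod z < 1"
  shows "cmod ((moeb \<alpha> \<beta> ^^ n) z) < 1 \<and> WW ((moeb \<alpha> \<beta> ^^ n) z) = of_real (kap ^ n) * WW z"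
proof (induction n)
  case 0
  then show ?case using assms by simp
next
  case (Suc n)
  then show ?case using moeb_ball(2) WW_moeb by (simp add: mult.assoc)
qed

lemma gk_periodic:
  assumes k: "k \<ge> 1" and th: "\<theta> = pi\<^sup>2 / (real k * \<bar>ln kap\<bar>)" and z: "cmod z < 1"
  shows "gk \<theta> ((moeb \<alpha> \<beta> ^^ k) z) = gk \<theta> z"
proof -
  have "WW z \<noteq> 0" using Re_WW[OF z] by auto
  then show ?thesis unfolding gk_def moeb_iter[OF z, THEN conjunct2]
    using FF_periodic[OF k kap th] by simp
qed

lemma main_aux:
  "\<forall>\<phi>\<in>Har. \<forall>K. compact K \<and> K \<subseteq> ball 0 1 \<longrightarrow> (\<forall>\<epsilon>>0.
           \<exists>\<psi>\<in>Har. (\<exists>k::nat. k \<ge> 1 \<and> (\<forall>z\<in>ball 0 1. \<psi> ((moeb \<alpha> \<beta> ^^ k) z) = \<psi> z)) \<and>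
                  (\<forall>z\<in>K. cmod (\<psi> z - \<phi> z) < \<epsilon>))"
proof (intro ballI allI impI)
  fix \<phi> :: "complex \<Rightarrow> complex" and K :: "complex set" and \<epsilon> :: real
  assume phi: "\<phi> \<in> Har" and K: "compact K \<and> K \<subseteq> ball 0 1" and eps: "\<epsilon> > 0"
  have hphi: "harmonic_on \<phi> (ball 0 1)" and phiim: "\<phi> ` ball 0 1 \<subseteq> cball 0 1"
    using phi unfolding Har_def by auto
  have cphi: "continuous_on (ball 0 1) \<phi>" using hphi unfolding harmonic_on_def by blast
  define H where "H = {u::complex. Re u > 0}"
  have oH: "open H" unfolding H_def by (rule open_halfspace_Re_gt)
  obtain d1 where d1: "d1 > 0" "\<forall>x\<in>K. \<forall>y. dist y x < d1 \<longrightarrow> y \<in> ball 0 1 \<and> dist (\<phi> y) (\<phi> x) < \<epsilon>"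
    using unif_near[OF cphi open_ball conjunct1[OF K] conjunct2[OF K] eps] by (elim exE conjE) simp
  define C1 where "C1 = WW ` K"
  have cWW: "continuous_on (ball 0 1) WW" by (rule holomorphic_on_imp_continuous_on[OF WW_holo])
  have C1: "compact C1" "C1 \<subseteq> H"
    unfolding C1_def H_def using K Re_WW
    by (auto intro!: compact_continuous_image continuous_on_subset[OF cWW])
  have cWI: "continuous_on H WI" unfolding H_def by (rule holomorphic_on_imp_continuous_on[OF WI_holo])
  obtain d2 where d2: "d2 > 0" "\<forall>x\<in>C1. \<forall>y. dist y x < d2 \<longrightarrow> y \<in> H \<and> dist (WI y) (WI x) < d1"
    using unif_near[OF cWI oH C1 d1(1)] by (elim exE conjE) simp
  define C2 where "C2 = Ln ` C1"
  have cLn: "continuous_on H Ln"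
    unfolding H_def by (intro holomorphic_on_imp_continuous_on holomorphic_intros) (auto simp: complex_nonpos_Reals_iff)
  have C2: "compact C2" unfolding C2_def
    by (rule compact_continuous_image[OF continuous_on_subset[OF cLn C1(2)] C1(1)])
  obtain d3 where d3: "d3 > 0" "\<forall>x\<in>C2. \<forall>y. dist y x < d3 \<longrightarrow> y \<in> UNIV \<and> dist (exp y) (exp x) < d2"
    using unif_near[OF continuous_on_exp[OF continuous_on_id] open_UNIV C2 subset_UNIV d2(1)] by (elim exE conjE) simp
  obtain R where R: "R > 0" "\<And>w. w \<in> C2 \<Longrightarrow> cmod w \<le> R"
    using compact_imp_bounded[OF C2] unfolding bounded_pos by blast
  obtain b where b: "b > 0" "\<And>\<theta>. 0 < \<theta> \<Longrightarrow> \<theta> < b \<Longrightarrow> \<forall>w. cmod w \<le> R \<longrightarrow> cmod (Gt \<theta> w - w) < d3"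
    using Gt_approx[OF R(1) d3(1)] unfolding eventually_at_right_field by auto
  define L where "L = \<bar>ln kap\<bar>"
  have L: "L > 0" using kap unfolding L_def by simp
  obtain k :: nat where k0: "real k > pi\<^sup>2 / (b * L)" using reals_Archimedean2 by blast
  define k' where "k' = max k 1"
  have k': "k' \<ge> 1" "real k' > pi\<^sup>2 / (b * L)" using k0 unfolding k'_def by auto
  define \<theta> where "\<theta> = pi\<^sup>2 / (real k' * L)"
  have th: "\<theta> > 0" using L k' unfolding \<theta>_def by simp
  have thb: "\<theta> < b"
  proof -
    have "pi\<^sup>2 < real k' * (b * L)" using k' b L by (simp add: field_simps)
    then show ?thesis unfolding \<theta>_def using L k' by (simp add: field_simps)
  qed
  define \<psi> where "\<psi> = (\<lambda>z. \<phi> (gk \<theta> z))"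
  show "\<exists>\<psi>\<in>Har. (\<exists>k::nat. k \<ge> 1 \<and> (\<forall>z\<in>ball 0 1. \<psi> ((moeb \<alpha> \<beta> ^^ k) z) = \<psi> z)) \<and>
                  (\<forall>z\<in>K. cmod (\<psi> z - \<phi> z) < \<epsilon>)"
  proof (intro bexI[of _ \<psi>] conjI exI[of _ k'] ballI)
    have gb: "gk \<theta> ` ball 0 1 \<subseteq> ball 0 1" using gk_ball[OF th] by auto
    show "\<psi> \<in> Har" unfolding Har_def \<psi>_def
      using harmonic_compose[OF hphi gk_holo[OF th] open_ball gb] gb phiim by auto
    show "k' \<ge> 1" by (rule k'(1))
    fix z :: complex assume z: "z \<in> ball 0 1"
    show "\<psi> ((moeb \<alpha> \<beta> ^^ k') z) = \<psi> z" unfolding \<psi>_def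
      using gk_periodic[OF k'(1) \<theta>_def[unfolded L_def]] z by simp
  next
    fix z :: complex assume z: "z \<in> K"
    have zb: "cmod z < 1" using K z by auto
    define u where "u = WW z"
    have u: "u \<in> C1" unfolding u_def C1_def using z by blast
    have un: "u \<noteq> 0" using Re_WW[OF zb] unfolding u_def by auto
    define w where "w = Ln u"
    have w: "w \<in> C2" unfolding w_def C2_def using u by blast
    have "cmod (Gt \<theta> w - w) < d3" using b(2)[OF th thb] R(2)[OF w] by blast
    then have "dist (exp (Gt \<theta> w)) (exp w) < d2" using d3(2) w by (simp add: dist_norm)
    then have "dist (FF \<theta> u) u < d2" unfolding FF_def w_def using un by simp
    then have "dist (WI (FF \<theta> u)) (WI u) < d1" using d2(2) u by blast
    then have "dist (gk \<theta> z) z < d1" unfolding gk_def u_def WI_WW[OF zb] .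
    then have "dist (\<phi> (gk \<theta> z)) (\<phi> z) < \<epsilon>" using d1(2) z by blast
    then show "cmod (\<psi> z - \<phi> z) < \<epsilon>" unfolding \<psi>_def by (simp add: dist_norm)
  qed
qed

end

theorem mainTheorem12:
  fixes \<alpha> \<beta> :: complex
  assumes "hyperbolic \<alpha> \<beta>"
  shows "\<forall>\<phi>\<in>Har. \<forall>K. compact K \<and> K \<subseteq> ball 0 1 \<longrightarrow> (\<forall>\<epsilon>>0.
           \<exists>\<psi>\<in>Har. (\<exists>k::nat. k \<ge> 1 \<and> (\<forall>z\<in>ball 0 1. \<psi> ((moeb \<alpha> \<beta> ^^ k) z) = \<psi> z)) \<and>
                  (\<forall>z\<in>K. cmod (\<psi> z - \<phi> z) < \<epsilon>))"
  by (rule main_aux[OF assms])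

end
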